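(* For every $\epsilon$ with $0<\epsilon<10^{-12}$ there exists $k_0=k_0(\epsilon)$ such that for every $k\ge k_0$ the following holds: if $K>(1-\epsilon)k$ and $G$ is a two-multicoloured (red/blue) $\tfrac{27}{8}\epsilon^4k$-almost-complete graph on $K$ vertices, then $G$ contains a red connected-matching on at least $(\tfrac23-7\epsilon^{1/8})k$ vertices or a blue connected-matching on at least $(\tfrac23-7\epsilon^{1/8})k$ vertices.
   Context: A two-multicolouring assigns each edge a nonempty subset of {red, blue}; $G_{\mathrm{red}}$ ($G_{\mathrm{blue}}$) is the spanning subgraph of edges whose set contains red (blue). A graph on $N$ vertices is $a$-almost-complete if its minimum degree is at least $(N-1)-a$. A matching is a set of pairwise vertex-disjoint edges; its number of vertices is twice its number of edges. A red (blue) connected-matching is a matching in $G_{\mathrm{red}}$ ($G_{\mathrm{blue}}$) all of whose edges lie in one connected component of $G_{\mathrm{red}}$ ($G_{\mathrm{blue}}$). *)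

theory Defs
  imports Complex_Main
begin

definition edges_on :: "nat set \<Rightarrow> nat set set \<Rightarrow> bool" where
  "edges_on V E \<longleftrightarrow> E \<subseteq> {{u, v} | u v. u \<in> V \<and> v \<in> V \<and> u \<noteq> v}"

text \<open>A two-multicoloured graph: each edge of G = R \<union> B carries a nonempty subset of
{red, blue}; R = G_red (edges whose set contains red), B = G_blue.\<close>
definition two_multicoloured_graph :: "nat set \<Rightarrow> nat set set \<Rightarrow> nat set set \<Rightarrow> bool" where
  "two_multicoloured_graph V R B \<longleftrightarrow> finite V \<and> edges_on V R \<and> edges_on V B"

definition degree :: "nat set set \<Rightarrow> nat \<Rightarrow> nat" where
  "degree E v = card {u. {u, v} \<in> E}"

definition almost_complete :: "nat set \<Rightarrow> nat set set \<Rightarrow> real \<Rightarrow> bool" where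
  "almost_complete V E a \<longleftrightarrow> (\<forall>v\<in>V. real (degree E v) \<ge> (real (card V) - 1) - a)"

definition matching :: "nat set set \<Rightarrow> bool" where
  "matching M \<longleftrightarrow> (\<forall>e\<in>M. \<forall>e'\<in>M. e \<noteq> e' \<longrightarrow> e \<inter> e' = {})"

definition adj :: "nat set set \<Rightarrow> (nat \<times> nat) set" where
  "adj E = {(u, v). {u, v} \<in> E \<and> u \<noteq> v}"

definition connected_matching :: "nat set \<Rightarrow> nat set set \<Rightarrow> nat set set \<Rightarrow> bool" where
  "connected_matching V E M \<longleftrightarrow> M \<subseteq> E \<and> matching M \<and>
     (\<exists>w\<in>V. \<forall>e\<in>M. \<forall>x\<in>e. (w, x) \<in> (adj E)\<^sup>*)"

end

theory Submission
  imports Defs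
begin


lemma edge_form:
  assumes "edges_on V E" "e \<in> E"
  shows "\<exists>u v. e = {u,v} \<and> u \<in> V \<and> v \<in> V \<and> u \<noteq> v"
  using assms unfolding edges_on_def by blast

lemma edge_card: "edges_on V E \<Longrightarrow> e \<in> E \<Longrightarrow> card e = 2"
  using edge_form by fastforce

lemma edge_sub: "edges_on V E \<Longrightarrow> e \<in> E \<Longrightarrow> e \<subseteq> V"
  using edge_form by fastforce

lemma finite_edges: "finite V \<Longrightarrow> edges_on V E \<Longrightarrow> finite E"
proof -
  assume "finite V" "edges_on V E"
  hence "E \<subseteq> Pow V" using edge_sub by blast
  thus "finite E" using \<open>finite V\<close> finite_subset by blast
qed

lemma max_matching:
  assumes "finite F"
  obtains M where "M \<subseteq> F" "matching M" "\<And>M'. M' \<subseteq> F \<Longrightarrow> matching M' \<Longrightarrow> card M' \<le> card M"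
proof -
  have "\<exists>x. (x \<subseteq> F \<and> matching x) \<and> (\<forall>y. (y \<subseteq> F \<and> matching y) \<longrightarrow> card y \<le> card x)"
    apply (rule ex_has_greatest_nat[where k="{}" and b="Suc (card F)"])
    using assms by (auto simp: matching_def le_imp_less_Suc card_mono)
  thus ?thesis using that by blast
qed

lemma matching_subset: "matching M \<Longrightarrow> M' \<subseteq> M \<Longrightarrow> matching M'"
  unfolding matching_def by blast

lemma matching_insert:
  assumes "finite M" "matching M" "f \<noteq> {}" "f \<inter> \<Union>M = {}"
  shows "matching (insert f M) \<and> card (insert f M) = Suc (card M)"
proof -
  have "f \<notin> M" using assms(3,4) by blast
  moreover have "matching (insert f M)" using assms(2,4) unfolding matching_def by blast
  ultimately show ?thesis using assms(1) by simp
qed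

lemma card_Union_matching:
  assumes "finite M" "matching M" "\<And>e. e \<in> M \<Longrightarrow> card e = 2"
  shows "card (\<Union>M) = 2 * card M"
proof -
  have fe: "\<And>e. e \<in> M \<Longrightarrow> finite e" using assms(3) card.infinite by fastforce
  have "pairwise disjnt M" using assms(2) unfolding matching_def pairwise_def disjnt_def by blast
  hence "card (\<Union>M) = sum card M" using card_Union_disjoint fe by blast
  also have "\<dots> = sum (\<lambda>_. 2) M" using assms(3) by (rule sum.cong[OF refl])
  finally show ?thesis by simp
qed

lemma adj_sym: "(u,v) \<in> adj E \<Longrightarrow> (v,u) \<in> adj E"
  unfolding adj_def by (auto simp: insert_commute)

lemma rtr_sym: "(x,y) \<in> (adj E)\<^sup>* \<Longrightarrow> (y,x) \<in> (adj E)\<^sup>*"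
proof (induction rule: rtrancl_induct)
  case base then show ?case by simp
next
  case (step y z) then show ?case using adj_sym by (meson converse_rtrancl_into_rtrancl)
qed

lemma adjI: "{u,v} \<in> E \<Longrightarrow> u \<noteq> v \<Longrightarrow> (u,v) \<in> adj E"
  unfolding adj_def by simp




lemma aug_contra:
  assumes "finite M" "matching M" "M \<subseteq> F"
    and "\<And>M'. M' \<subseteq> F \<Longrightarrow> matching M' \<Longrightarrow> card M' \<le> card M"
    and "f \<in> F" "f \<noteq> {}" "f \<inter> \<Union>M = {}"
  shows False
proof -
  from matching_insert[OF assms(1,2,6,7)]
  have A: "matching (insert f M)" "card (insert f M) = Suc (card M)" by auto
  have "insert f M \<subseteq> F" using assms(3,5) by simp
  from assms(4)[OF this A(1)] A(2) show False by simp
qed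

lemma card_insert_le_Suc: "card (insert x A) \<le> Suc (card A)"
  by (cases "finite A") (auto simp: card_insert_if)

lemma core:
  fixes V W :: "nat set" and E1 E2 :: "nat set set" and a :: real and w :: nat
  assumes fin: "finite V" and e1: "edges_on V E1" and e2: "edges_on V E2"
    and WV: "W \<subseteq> V" and wW: "w \<in> W" and conn: "\<forall>x\<in>W. (w,x) \<in> (adj E1)\<^sup>*"
    and nn: "\<forall>x\<in>W. real (card {y\<in>W. y \<noteq> x \<and> {x,y} \<notin> E1 \<union> E2}) \<le> a"
  shows "(\<exists>M. connected_matching V E1 M \<and> real (card (\<Union>M)) \<ge> 2/3 * real (card W) - 2*a - 2) \<or>
         (\<exists>M. connected_matching V E2 M \<and> real (card (\<Union>M)) \<ge> 2/3 * real (card W) - 2*a - 2)"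
proof -
  have finW: "finite W" using fin WV finite_subset by blast
  have fE1: "finite E1" and fE2: "finite E2" using fin e1 e2 finite_edges by auto
  define F1 where "F1 = {e\<in>E1. e \<subseteq> W}"
  have fF1: "finite F1" using fE1 unfolding F1_def by simp
  obtain M where MF: "M \<subseteq> F1" and Mm: "matching M"
    and Mmax: "\<And>M'. M' \<subseteq> F1 \<Longrightarrow> matching M' \<Longrightarrow> card M' \<le> card M"
    using max_matching[OF fF1] by blast
  have fM: "finite M" using MF fF1 finite_subset by blast
  define m where "m = card M"
  have c2M: "\<And>e. e \<in> M \<Longrightarrow> card e = 2" using MF e1 edge_card unfolding F1_def by blast
  have cUM: "card (\<Union>M) = 2 * m" using card_Union_matching[OF fM Mm c2M] m_def by simp
  have UMW: "\<Union>M \<subseteq> W" using MF unfolding F1_def by blast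
  show ?thesis
  proof (cases "real (2*m) \<ge> 2/3 * real (card W) - 2*a - 2")
    case True
    have "connected_matching V E1 M"
      unfolding connected_matching_def using MF Mm wW WV conn UMW unfolding F1_def by blast
    thus ?thesis using True cUM by (intro disjI1 exI[of _ M]) simp
  next
    case False
    define U where "U = W - \<Union>M"
    have cU: "real (card U) = real (card W) - 2 * real m"
      unfolding U_def using card_Diff_subset[OF finite_subset[OF UMW finW] UMW] cUM
        card_mono[OF finW UMW] by simp
    have UW: "U \<subseteq> W" unfolding U_def by blast
    have finU: "finite U" using finW UW finite_subset by blast
    have noE1U: "{u,v} \<notin> E1" if "u \<in> U" "v \<in> U" for u v
    proof
      assume uv: "{u,v} \<in> E1"
      have "{u,v} \<inter> \<Union>M = {}" using that unfolding U_def by blast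
      from matching_insert[OF fM Mm _ this] have "matching (insert {u,v} M)"
        "card (insert {u,v} M) = Suc m" using m_def by auto
      moreover have "insert {u,v} M \<subseteq> F1" using MF uv that UW unfolding F1_def by blast
      ultimately show False using Mmax[of "insert {u,v} M"] m_def by simp
    qed
    have nnU: "real (card {v\<in>U. v \<noteq> u \<and> {u,v} \<notin> E2}) \<le> a" if "u \<in> U" for u
    proof -
      have "{v\<in>U. v \<noteq> u \<and> {u,v} \<notin> E2} \<subseteq> {y\<in>W. y \<noteq> u \<and> {u,y} \<notin> E1 \<union> E2}"
        using noE1U that UW by blast
      hence "card {v\<in>U. v \<noteq> u \<and> {u,v} \<notin> E2} \<le> card {y\<in>W. y \<noteq> u \<and> {u,y} \<notin> E1 \<union> E2}"
        by (rule card_mono[rotated]) (simp add: finW)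
      thus ?thesis using nn that UW by force
    qed
    have key: "\<exists>z\<in>e. \<exists>u. \<forall>v\<in>U. {z,v} \<in> E1 \<longrightarrow> v = u" if eM: "e \<in> M" for e
    proof (rule ccontr)
      assume H: "\<not> ?thesis"
      obtain x y where exy: "e = {x,y}" "x \<noteq> y" using edge_form[OF e1] eM MF unfolding F1_def by blast
      have H': "\<forall>z\<in>e. \<forall>u. \<exists>v\<in>U. {z,v} \<in> E1 \<and> v \<noteq> u" using H by blast
      have xe: "x \<in> e" and ye: "y \<in> e" using exy by auto
      obtain u1 where u1: "u1 \<in> U" "{x,u1} \<in> E1" using H'[rule_format, OF xe, of x] by blast
      obtain u2 where u2: "u2 \<in> U" "{y,u2} \<in> E1" "u2 \<noteq> u1" using H'[rule_format, OF ye, of u1] by blast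
      have xyM: "x \<in> \<Union>M" "y \<in> \<Union>M" using exy eM by auto
      have u12: "u1 \<notin> \<Union>M" "u2 \<notin> \<Union>M" using u1 u2 unfolding U_def by auto
      have other: "x \<notin> e' \<and> y \<notin> e'" if "e' \<in> M - {e}" for e'
      proof -
        have "e \<inter> e' = {}" using Mm that eM unfolding matching_def by auto
        thus ?thesis using exy by auto
      qed
      define M0 where "M0 = M - {e}"
      have fM0: "finite M0" and mM0: "matching M0" using fM Mm matching_subset unfolding M0_def by auto
      have cM0: "Suc (card M0) = m" unfolding M0_def m_def using eM fM
        by (metis card_Diff1_less_iff card_Suc_Diff1 )
      have d2: "{y,u2} \<inter> \<Union>M0 = {}" using other u12 unfolding M0_def by blast
      from matching_insert[OF fM0 mM0 _ d2]
      have A: "matching (insert {y,u2} M0)" "card (insert {y,u2} M0) = Suc (card M0)" by auto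
      have xM0: "x \<notin> \<Union>M0" using other unfolding M0_def by blast
      have u1M0: "u1 \<notin> \<Union>M0" using u12 unfolding M0_def by blast
      have ne: "x \<noteq> u2" "u1 \<noteq> y" using u12 xyM by auto
      have d1: "{x,u1} \<inter> \<Union>(insert {y,u2} M0) = {}"
        using xM0 u1M0 ne exy(2) u2(3) by auto
      from matching_insert[OF _ A(1) _ d1] fM0
      have B: "matching (insert {x,u1} (insert {y,u2} M0))"
        "card (insert {x,u1} (insert {y,u2} M0)) = Suc (Suc (card M0))" using A(2) by auto
      have B2: "card (insert {x,u1} (insert {y,u2} M0)) = Suc m" using B(2) cM0 by simp
      have xW: "x \<in> W" "y \<in> W" using xyM UMW by auto
      have "M0 \<subseteq> F1" using MF unfolding M0_def by blast
      hence "insert {x,u1} (insert {y,u2} M0) \<subseteq> F1"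
        using u1 u2 UW xW unfolding F1_def by auto
      from Mmax[OF this B(1)] B2 m_def show False by simp
    qed
    have "\<forall>e\<in>M. \<exists>zz. zz \<in> e \<and> (\<exists>u. \<forall>v\<in>U. {zz,v} \<in> E1 \<longrightarrow> v = u)"
    proof
      fix e assume "e \<in> M"
      from key[OF this] obtain zz where "zz \<in> e" "\<exists>u. \<forall>v\<in>U. {zz,v} \<in> E1 \<longrightarrow> v = u" by (elim bexE)
      thus "\<exists>zz. zz \<in> e \<and> (\<exists>u. \<forall>v\<in>U. {zz,v} \<in> E1 \<longrightarrow> v = u)" by blast
    qed
    from bchoice[OF this] obtain z where z0: "\<forall>e\<in>M. z e \<in> e \<and> (\<exists>u. \<forall>v\<in>U. {z e,v} \<in> E1 \<longrightarrow> v = u)"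
      by (elim exE)
    have zin: "\<And>e. e \<in> M \<Longrightarrow> z e \<in> e" using z0 by simp
    have zu: "\<And>e. e \<in> M \<Longrightarrow> \<exists>u. \<forall>v\<in>U. {z e,v} \<in> E1 \<longrightarrow> v = u" using z0 by simp
    define Y where "Y = z ` M"
    have injz: "inj_on z M"
    proof (rule inj_onI)
      fix e e' assume "e \<in> M" "e' \<in> M" "z e = z e'"
      hence "e \<inter> e' \<noteq> {}" using zin[of e] zin[of e'] by auto
      thus "e = e'" using Mm \<open>e \<in> M\<close> \<open>e' \<in> M\<close> unfolding matching_def by blast
    qed
    have cY: "card Y = m" unfolding Y_def m_def using card_image[OF injz] .
    have YM: "Y \<subseteq> \<Union>M" unfolding Y_def using zin by auto
    have YU: "Y \<inter> U = {}" using YM unfolding U_def by blast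
    have YW: "Y \<subseteq> W" using YM UMW by blast
    have finY: "finite Y" using YW finW finite_subset by blast
    have nnY: "real (card {v\<in>U. {y,v} \<notin> E2}) \<le> a + 1" if yY: "y \<in> Y" for y
    proof -
      obtain e where "e \<in> M" "y = z e" using yY Y_def by blast
      then obtain u where u: "\<forall>v\<in>U. {y,v} \<in> E1 \<longrightarrow> v = u" using zu by blast
      have "{v\<in>U. {y,v} \<notin> E2} \<subseteq> insert u {v\<in>W. v \<noteq> y \<and> {y,v} \<notin> E1 \<union> E2}"
        using u YU yY UW by blast
      hence "card {v\<in>U. {y,v} \<notin> E2} \<le> card (insert u {v\<in>W. v \<noteq> y \<and> {y,v} \<notin> E1 \<union> E2})"
        by (rule card_mono[rotated]) (simp add: finW)
      also have "\<dots> \<le> Suc (card {v\<in>W. v \<noteq> y \<and> {y,v} \<notin> E1 \<union> E2})"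
        by (rule card_insert_le_Suc)
      finally show ?thesis using nn yY YW by force
    qed
    have a0: "a \<ge> 0"
    proof -
      have "real (card {y\<in>W. y \<noteq> w \<and> {w,y} \<notin> E1 \<union> E2}) \<le> a" using nn wW by blast
      moreover have "0 \<le> real (card {y\<in>W. y \<noteq> w \<and> {w,y} \<notin> E1 \<union> E2})" by simp
      ultimately show ?thesis by linarith
    qed
    define F3 where "F3 = {e\<in>E2. \<exists>y\<in>Y. \<exists>u\<in>U. e = {y,u}}"
    have fF3: "finite F3" using fE2 unfolding F3_def by simp
    obtain M1 where M1F: "M1 \<subseteq> F3" and M1m: "matching M1"
      and M1max: "\<And>M'. M' \<subseteq> F3 \<Longrightarrow> matching M' \<Longrightarrow> card M' \<le> card M1"
      using max_matching[OF fF3] by blast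
    have fM1: "finite M1" using M1F fF3 finite_subset by blast
    define j where "j = card M1"
    have c2M1: "\<And>e. e \<in> M1 \<Longrightarrow> card e = 2" using M1F e2 edge_card unfolding F3_def by blast
    have cUM1: "card (\<Union>M1) = 2 * j" using card_Union_matching[OF fM1 M1m c2M1] j_def by simp
    have M1form: "\<exists>y\<in>Y. \<exists>u\<in>U. e = {y,u}" if "e \<in> M1" for e
    proof -
      have "e \<in> F3" using M1F that by (rule subsetD)
      thus ?thesis unfolding F3_def by simp
    qed
    have UM1sub: "\<Union>M1 \<subseteq> U \<union> Y"
    proof
      fix x assume "x \<in> \<Union>M1"
      then obtain e where "e \<in> M1" "x \<in> e" by (elim UnionE)
      then obtain y u where "y \<in> Y" "u \<in> U" "e = {y,u}" using M1form by blast
      thus "x \<in> U \<union> Y" using \<open>x \<in> e\<close> by auto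
    qed
    have finUM1: "finite (\<Union>M1)"
    proof (rule finite_Union[OF fM1])
      fix e assume "e \<in> M1"
      hence "card e = 2" by (rule c2M1)
      thus "finite e" by (intro card_ge_0_finite) simp
    qed
    have le1: "card (\<Union>M1 \<inter> U) \<le> j"
    proof -
      have eq: "\<Union>M1 \<inter> U = (\<Union>e\<in>M1. e \<inter> U)" by blast
      have "card (\<Union>M1 \<inter> U) \<le> (\<Sum>e\<in>M1. card (e \<inter> U))" unfolding eq by (rule card_UN_le[OF fM1])
      also have "\<dots> = (\<Sum>e\<in>M1. 1)"
      proof (rule sum.cong[OF refl])
        fix e assume "e \<in> M1"
        then obtain y u where "y \<in> Y" "u \<in> U" "e = {y,u}" using M1form by blast
        hence "e \<inter> U = {u}" using YU by auto
        thus "card (e \<inter> U) = 1" by simp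
      qed
      finally show ?thesis using j_def by simp
    qed
    have le2: "card (\<Union>M1 \<inter> Y) \<le> j"
    proof -
      have eq: "\<Union>M1 \<inter> Y = (\<Union>e\<in>M1. e \<inter> Y)" by blast
      have "card (\<Union>M1 \<inter> Y) \<le> (\<Sum>e\<in>M1. card (e \<inter> Y))" unfolding eq by (rule card_UN_le[OF fM1])
      also have "\<dots> = (\<Sum>e\<in>M1. 1)"
      proof (rule sum.cong[OF refl])
        fix e assume "e \<in> M1"
        then obtain y u where "y \<in> Y" "u \<in> U" "e = {y,u}" using M1form by blast
        hence "e \<inter> Y = {y}" using YU by auto
        thus "card (e \<inter> Y) = 1" by simp
      qed
      finally show ?thesis using j_def by simp
    qed
    have spl: "card (\<Union>M1) = card (\<Union>M1 \<inter> U) + card (\<Union>M1 \<inter> Y)"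
    proof -
      have "\<Union>M1 = (\<Union>M1 \<inter> U) \<union> (\<Union>M1 \<inter> Y)" using UM1sub by blast
      moreover have "card ((\<Union>M1 \<inter> U) \<union> (\<Union>M1 \<inter> Y)) = card (\<Union>M1 \<inter> U) + card (\<Union>M1 \<inter> Y)"
        by (rule card_Un_disjoint) (use finUM1 YU in auto)
      ultimately show ?thesis by simp
    qed
    have eqU: "card (\<Union>M1 \<inter> U) = j" and eqY: "card (\<Union>M1 \<inter> Y) = j"
      using le1 le2 spl cUM1 by linarith+
    define U1 where "U1 = U - \<Union>M1"
    have U1U: "U1 \<subseteq> U" unfolding U1_def by blast
    have cU1: "real (card U1) = real (card U) - real j"
    proof -
      have "U1 = U - (\<Union>M1 \<inter> U)" unfolding U1_def by blast
      moreover have "card (U - (\<Union>M1 \<inter> U)) = card U - card (\<Union>M1 \<inter> U)"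
        by (rule card_Diff_subset) (use finUM1 in auto)
      moreover have "card (\<Union>M1 \<inter> U) \<le> card U" by (rule card_mono[OF finU]) blast
      ultimately show ?thesis using eqU by simp
    qed
    have jcase: "j = m \<or> real (card U1) \<le> a + 1"
    proof (cases "Y \<subseteq> \<Union>M1")
      case True
      hence "\<Union>M1 \<inter> Y = Y" by blast
      thus ?thesis using eqY cY by simp
    next
      case False
      then obtain y where yY: "y \<in> Y" and yn: "y \<notin> \<Union>M1" by blast
      have "U1 \<subseteq> {v\<in>U. {y,v} \<notin> E2}"
      proof
        fix v assume vU1: "v \<in> U1"
        show "v \<in> {v\<in>U. {y,v} \<notin> E2}"
        proof (rule ccontr)
          assume "v \<notin> {v\<in>U. {y,v} \<notin> E2}"
          have vU: "v \<in> U" using vU1 U1U by blast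
          hence yv: "{y,v} \<in> E2" using \<open>v \<notin> _\<close> by simp
          have "{y,v} \<in> F3" using yv yY vU unfolding F3_def by blast
          moreover have "{y,v} \<inter> \<Union>M1 = {}" using yn vU1 unfolding U1_def by blast
          ultimately show False using aug_contra[OF fM1 M1m M1F M1max, of "{y,v}"] by simp
        qed
      qed
      hence "card U1 \<le> card {v\<in>U. {y,v} \<notin> E2}" by (rule card_mono[rotated]) (simp add: finU)
      thus ?thesis using nnY[OF yY] by simp
    qed
    have finU1: "finite U1" using finU U1U finite_subset by blast
    define F4 where "F4 = {e\<in>E2. e \<subseteq> U1}"
    have fF4: "finite F4" using fE2 unfolding F4_def by simp
    obtain M2 where M2F: "M2 \<subseteq> F4" and M2m: "matching M2"
      and M2max: "\<And>M'. M' \<subseteq> F4 \<Longrightarrow> matching M' \<Longrightarrow> card M' \<le> card M2"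
      using max_matching[OF fF4] by blast
    have fM2: "finite M2" using M2F fF4 finite_subset by blast
    have UM2: "\<Union>M2 \<subseteq> U1" using M2F unfolding F4_def by blast
    have finUM2: "finite (\<Union>M2)" using UM2 finU1 finite_subset by blast
    define U2 where "U2 = U1 - \<Union>M2"
    have cU2eq: "real (card U2) = real (card U1) - real (card (\<Union>M2))"
      unfolding U2_def using card_Diff_subset[OF finUM2 UM2] card_mono[OF finU1 UM2] by simp
    have cU2: "real (card U2) \<le> a + 1"
    proof (cases "U2 = {}")
      case True thus ?thesis using a0 by simp
    next
      case False
      then obtain u where uU2: "u \<in> U2" by blast
      have uU: "u \<in> U" using uU2 U1U unfolding U2_def by blast
      have sub: "U2 - {u} \<subseteq> {v\<in>U. v \<noteq> u \<and> {u,v} \<notin> E2}"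
      proof
        fix v assume vU2: "v \<in> U2 - {u}"
        show "v \<in> {v\<in>U. v \<noteq> u \<and> {u,v} \<notin> E2}"
        proof (rule ccontr)
          assume "v \<notin> {v\<in>U. v \<noteq> u \<and> {u,v} \<notin> E2}"
          have vU: "v \<in> U" "v \<noteq> u" using vU2 U1U unfolding U2_def by auto
          hence uv: "{u,v} \<in> E2" using \<open>v \<notin> _\<close> by simp
          have "{u,v} \<in> F4" using uv uU2 vU2 unfolding F4_def U2_def by blast
          moreover have "{u,v} \<inter> \<Union>M2 = {}" using uU2 vU2 unfolding U2_def by blast
          ultimately show False using aug_contra[OF fM2 M2m M2F M2max, of "{u,v}"] by simp
        qed
      qed
      have finU2: "finite U2" using finU1 unfolding U2_def by simp
      have "card U2 = Suc (card (U2 - {u}))" using card_Suc_Diff1[OF finU2 uU2] by simp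
      moreover have "card (U2 - {u}) \<le> card {v\<in>U. v \<noteq> u \<and> {u,v} \<notin> E2}"
        by (rule card_mono[OF _ sub]) (simp add: finU)
      ultimately have "real (card U2) \<le> 1 + real (card {v\<in>U. v \<noteq> u \<and> {u,v} \<notin> E2})" by simp
      thus ?thesis using nnU[OF uU] by linarith
    qed
    define N where "N = M1 \<union> M2"
    have dis: "e \<inter> e' = {}" if "e \<in> M1" "e' \<in> M2" for e e'
    proof -
      have "e \<subseteq> \<Union>M1" using that by blast
      moreover have "e' \<subseteq> U1" using that UM2 by blast
      ultimately show ?thesis unfolding U1_def by blast
    qed
    have Nm: "matching N"
      unfolding matching_def N_def
    proof (intro ballI impI)
      fix e e' assume e: "e \<in> M1 \<union> M2" and e': "e' \<in> M1 \<union> M2" and ne: "e \<noteq> e'"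
      show "e \<inter> e' = {}"
      proof (cases "e \<in> M1")
        case True
        show ?thesis
        proof (cases "e' \<in> M1")
          case True2: True
          thus ?thesis using True M1m ne unfolding matching_def by blast
        next
          case False
          hence "e' \<in> M2" using e' by blast
          thus ?thesis using dis True by blast
        qed
      next
        case False
        hence eM2: "e \<in> M2" using e by blast
        show ?thesis
        proof (cases "e' \<in> M1")
          case True
          thus ?thesis using dis eM2 by blast
        next
          case False
          hence "e' \<in> M2" using e' by blast
          thus ?thesis using eM2 M2m ne unfolding matching_def by blast
        qed
      qed
    qed
    have "F3 \<subseteq> E2" "F4 \<subseteq> E2" unfolding F3_def F4_def by auto
    hence NE2: "N \<subseteq> E2" using M1F M2F unfolding N_def by blast
    have cN: "card (\<Union>N) = card (\<Union>M1) + card (\<Union>M2)"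
    proof -
      have "\<Union>N = \<Union>M1 \<union> \<Union>M2" unfolding N_def by blast
      moreover have "\<Union>M1 \<inter> \<Union>M2 = {}" using UM2 unfolding U1_def by blast
      ultimately show ?thesis using card_Un_disjoint[OF finUM1 finUM2] by simp
    qed
    have UNsub: "\<Union>N \<subseteq> U \<union> Y" using UM1sub UM2 U1U unfolding N_def by blast
    have bigU: "real (card U) > 2 * a + 2" using cU False a0 by simp
    have "U \<noteq> {}"
    proof
      assume "U = {}" thus False using bigU a0 by simp
    qed
    then obtain r where rU: "r \<in> U" by blast
    have nbr: "real (card {v\<in>U. v \<noteq> x \<and> {x,v} \<in> E2}) \<ge> real (card U) - 1 - a" if xU: "x \<in> U" for x
    proof -
      define P where "P = {v\<in>U. v \<noteq> x \<and> {x,v} \<in> E2}"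
      define Q where "Q = {v\<in>U. v \<noteq> x \<and> {x,v} \<notin> E2}"
      have eq: "U = insert x (P \<union> Q)" using xU unfolding P_def Q_def by blast
      have "card U \<le> Suc (card (P \<union> Q))" using card_insert_le_Suc[of x "P \<union> Q"] eq by simp
      also have "\<dots> \<le> Suc (card P + card Q)" using card_Un_le[of P Q] by simp
      finally have "real (card U) \<le> real (Suc (card P + card Q))" by (simp only: of_nat_le_iff)
      hence "real (card U) \<le> 1 + real (card P) + real (card Q)" by simp
      thus ?thesis using nnU[OF xU] unfolding P_def Q_def by linarith
    qed
    have reachU: "(r,x) \<in> (adj E2)\<^sup>*" if xU: "x \<in> U" for x
    proof (cases "x = r")
      case True thus ?thesis by simp
    next
      case False
      define Ar where "Ar = {v\<in>U. v \<noteq> r \<and> {r,v} \<in> E2}"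
      define Ax where "Ax = {v\<in>U. v \<noteq> x \<and> {x,v} \<in> E2}"
      have fA: "finite Ar" "finite Ax" using finU unfolding Ar_def Ax_def by auto
      have "card (Ar \<union> Ax) \<le> card U" by (rule card_mono[OF finU]) (auto simp: Ar_def Ax_def)
      moreover have "card Ar + card Ax = card (Ar \<union> Ax) + card (Ar \<inter> Ax)" using card_Un_Int[OF fA] .
      moreover have "real (card Ar) \<ge> real (card U) - 1 - a" using nbr[OF rU] Ar_def by simp
      moreover have "real (card Ax) \<ge> real (card U) - 1 - a" using nbr[OF xU] Ax_def by simp
      ultimately have h: "real (card (Ar \<union> Ax)) \<le> real (card U)"
        "real (card Ar) + real (card Ax) = real (card (Ar \<union> Ax)) + real (card (Ar \<inter> Ax))"
        "real (card Ar) \<ge> real (card U) - 1 - a" "real (card Ax) \<ge> real (card U) - 1 - a"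
        by (simp_all only: of_nat_le_iff of_nat_add[symmetric] of_nat_eq_iff)
      hence "real (card (Ar \<inter> Ax)) > 0" using bigU by linarith
      hence "Ar \<inter> Ax \<noteq> {}" by auto
      then obtain v where "v \<in> Ar" "v \<in> Ax" by blast
      hence "(r,v) \<in> adj E2" "(v,x) \<in> adj E2" unfolding Ar_def Ax_def adj_def by (auto simp: insert_commute)
      thus ?thesis by auto
    qed
    have reachY: "(r,y) \<in> (adj E2)\<^sup>*" if yY: "y \<in> Y" for y
    proof -
      define P where "P = {v\<in>U. {y,v} \<in> E2}"
      define Q where "Q = {v\<in>U. {y,v} \<notin> E2}"
      have eq: "U = P \<union> Q" unfolding P_def Q_def by blast
      have "card U \<le> card P + card Q" using card_Un_le[of P Q] eq by simp
      hence "real (card U) \<le> real (card P + card Q)" by (simp only: of_nat_le_iff)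
      hence "real (card U) \<le> real (card P) + real (card Q)" by simp
      hence "real (card {v\<in>U. {y,v} \<in> E2}) > 0" using nnY[OF yY] bigU a0 unfolding P_def Q_def by linarith
      hence "{v\<in>U. {y,v} \<in> E2} \<noteq> {}" using card_gt_0_iff by (metis of_nat_0_less_iff)
      then obtain v where vU: "v \<in> U" and yv: "{y,v} \<in> E2" by blast
      have "v \<noteq> y" using vU yY YU by blast
      hence "(v,y) \<in> adj E2" using yv unfolding adj_def by (auto simp: insert_commute)
      thus ?thesis using reachU[OF vU] by auto
    qed
    have "connected_matching V E2 N"
      unfolding connected_matching_def
    proof (intro conjI bexI[of _ r] ballI)
      show "N \<subseteq> E2" by (rule NE2)
      show "matching N" by (rule Nm)
      show "r \<in> V" using rU UW WV by blast
      fix e x assume "e \<in> N" "x \<in> e"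
      hence "x \<in> U \<union> Y" using UNsub by blast
      thus "(r,x) \<in> (adj E2)\<^sup>*" using reachU reachY by blast
    qed
    moreover have "real (card (\<Union>N)) \<ge> 2/3 * real (card W) - 2*a - 2"
    proof -
      have "real (card (\<Union>N)) = 2 * real j + real (card U1) - real (card U2)"
        using cN cUM1 cU2eq by simp
      moreover have "2 * real m < 2/3 * real (card W) - 2*a - 2" using False by simp
      ultimately have T1: "real (card (\<Union>N)) = 2 * real j + real (card U1) - real (card U2)"
        and T2: "2 * real m < 2/3 * real (card W) - 2*a - 2" by auto
      show ?thesis
      proof (cases "j = m")
        case True
        hence "real j = real m" by simp
        thus ?thesis using T1 T2 cU1 cU2 cU by linarith
      next
        case False
        hence "real (card U1) \<le> a + 1" using jcase by blast
        thus ?thesis using T1 T2 cU1 cU2 cU by linarith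
      qed
    qed
    ultimately show ?thesis by blast
  qed
qed




lemma blue_conn:
  fixes V :: "nat set" and R B :: "nat set set" and a :: real
  assumes fin: "finite V" and eR: "edges_on V R" and eB: "edges_on V B"
    and nn: "\<forall>x\<in>V. real (card {y\<in>V. y \<noteq> x \<and> {x,y} \<notin> R \<union> B}) \<le> a"
    and big: "\<forall>x\<in>V. real (card (V - {y\<in>V. (x,y) \<in> (adj R)\<^sup>*})) > 2 * a"
    and xV: "x \<in> V" and yV: "y \<in> V"
  shows "(x,y) \<in> (adj B)\<^sup>*"
proof -
  define C where "C = (\<lambda>x. {y\<in>V. (x,y) \<in> (adj R)\<^sup>*})"
  have nnS: "real (card {z\<in>S. {x,z} \<notin> R \<union> B}) \<le> a" if "x \<in> V" "S \<subseteq> V - {x}" for x S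
  proof -
    have "{z\<in>S. {x,z} \<notin> R \<union> B} \<subseteq> {y\<in>V. y \<noteq> x \<and> {x,y} \<notin> R \<union> B}" using that by blast
    hence "card {z\<in>S. {x,z} \<notin> R \<union> B} \<le> card {y\<in>V. y \<noteq> x \<and> {x,y} \<notin> R \<union> B}"
      by (rule card_mono[rotated]) (simp add: fin)
    hence "real (card {z\<in>S. {x,z} \<notin> R \<union> B}) \<le> real (card {y\<in>V. y \<noteq> x \<and> {x,y} \<notin> R \<union> B})"
      by (simp only: of_nat_le_iff)
    thus ?thesis using nn that(1) by fastforce
  qed
  have noR: "{y,z} \<notin> R" if "y \<in> C x" "z \<in> V - C x" for x y z
  proof
    assume yz: "{y,z} \<in> R"
    have "y \<noteq> z" using that by blast
    with yz have "(y,z) \<in> adj R" by (rule adjI)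
    moreover have "(x,y) \<in> (adj R)\<^sup>*" using that unfolding C_def by blast
    ultimately have "(x,z) \<in> (adj R)\<^sup>*" by simp
    thus False using that unfolding C_def by blast
  qed
  have selfC: "x \<in> C x" if "x \<in> V" for x using that unfolding C_def by simp
  have finD: "finite (V - C x)" for x using fin by simp
  have Pbig: "real (card {z\<in>V - C x. {v,z} \<in> B}) \<ge> real (card (V - C x)) - a"
    if "x \<in> V" "v \<in> C x" for x v
  proof -
    have vV: "v \<in> V" using that unfolding C_def by blast
    define P where "P = {z\<in>V - C x. {v,z} \<in> B}"
    define Q where "Q = {z\<in>V - C x. {v,z} \<notin> R \<union> B}"
    have "V - C x \<subseteq> P \<union> Q" unfolding P_def Q_def using noR[OF that(2)] by blast
    hence "card (V - C x) \<le> card (P \<union> Q)" by (rule card_mono[rotated]) (simp add: P_def Q_def fin)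
    also have "\<dots> \<le> card P + card Q" by (rule card_Un_le)
    finally have "real (card (V - C x)) \<le> real (card P + card Q)" by (simp only: of_nat_le_iff)
    moreover have "real (card Q) \<le> a" unfolding Q_def
      by (rule nnS[OF vV]) (use that in \<open>auto simp: C_def\<close>)
    ultimately show ?thesis unfolding P_def by simp
  qed
  have same: "(u,v) \<in> (adj B)\<^sup>*" if "u \<in> V" "v \<in> C u" for u v
  proof -
    define Pu where "Pu = {z\<in>V - C u. {u,z} \<in> B}"
    define Pv where "Pv = {z\<in>V - C u. {v,z} \<in> B}"
    have "real (card Pu) \<ge> real (card (V - C u)) - a" unfolding Pu_def by (rule Pbig[OF that(1) selfC[OF that(1)]])
    moreover have "real (card Pv) \<ge> real (card (V - C u)) - a" unfolding Pv_def by (rule Pbig[OF that])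
    moreover have "real (card (V - C u)) > 2 * a" using big that(1) unfolding C_def by blast
    moreover have "card (Pu \<union> Pv) \<le> card (V - C u)" by (rule card_mono[OF finD]) (auto simp: Pu_def Pv_def)
    moreover have "card Pu + card Pv = card (Pu \<union> Pv) + card (Pu \<inter> Pv)"
      by (rule card_Un_Int) (simp_all add: Pu_def Pv_def fin)
    ultimately have "real (card (Pu \<inter> Pv)) > 0"
      by (simp only: of_nat_le_iff[symmetric] of_nat_add[symmetric] of_nat_eq_iff[symmetric])
    hence "Pu \<inter> Pv \<noteq> {}" using card_gt_0_iff by (metis of_nat_0_less_iff)
    then obtain z where zPu: "z \<in> Pu" and zPv: "z \<in> Pv" by blast
    have "z \<noteq> u" using zPu selfC[OF that(1)] unfolding Pu_def by blast
    hence 1: "(u,z) \<in> adj B" using zPu unfolding Pu_def by (intro adjI) auto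
    have "z \<noteq> v" using zPv that(2) unfolding Pv_def by blast
    hence "(v,z) \<in> adj B" using zPv unfolding Pv_def by (intro adjI) auto
    hence 2: "(z,v) \<in> adj B" by (rule adj_sym)
    from 1 2 show ?thesis by simp
  qed
  show ?thesis
  proof (cases "y \<in> C x")
    case True thus ?thesis using same xV by blast
  next
    case yn: False
    define Px where "Px = {z\<in>V - C x. {x,z} \<in> B}"
    have "real (card Px) \<ge> real (card (V - C x)) - a" unfolding Px_def by (rule Pbig[OF xV selfC[OF xV]])
    moreover have "real (card (V - C x)) > 2 * a" using big xV unfolding C_def by blast
    moreover have a0: "a \<ge> 0" using nn xV by (meson of_nat_0_le_iff order_trans)
    ultimately have cPx: "real (card Px) > a" by linarith
    have xz: "(x,z) \<in> adj B" if "z \<in> Px" for z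
    proof -
      have "z \<noteq> x" using that selfC[OF xV] unfolding Px_def by blast
      thus ?thesis using that unfolding Px_def by (intro adjI) auto
    qed
    show ?thesis
    proof (cases "{x,y} \<in> B")
      case True
      have "x \<noteq> y" using yn selfC[OF xV] by blast
      hence "(x,y) \<in> adj B" using True by (intro adjI)
      thus ?thesis by simp
    next
      case xyB: False
      show ?thesis
      proof (cases "\<exists>z\<in>Px. z \<in> C y")
        case True
        then obtain z where zP: "z \<in> Px" and zC: "z \<in> C y" by blast
        have "(y,z) \<in> (adj B)\<^sup>*" by (rule same[OF yV zC])
        hence "(z,y) \<in> (adj B)\<^sup>*" by (rule rtr_sym)
        thus ?thesis using xz[OF zP] by simp
      next
        case False
        have "\<exists>z\<in>Px. {y,z} \<in> R \<union> B"
        proof (rule ccontr)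
          assume "\<not> ?thesis"
          hence "Px \<subseteq> {z\<in>Px. {y,z} \<notin> R \<union> B}" by blast
          hence "card Px \<le> card {z\<in>Px. {y,z} \<notin> R \<union> B}" by (rule card_mono[rotated]) (simp add: Px_def fin)
          hence "real (card Px) \<le> real (card {z\<in>Px. {y,z} \<notin> R \<union> B})" by (simp only: of_nat_le_iff)
          moreover have "real (card {z\<in>Px. {y,z} \<notin> R \<union> B}) \<le> a"
          proof (rule nnS[OF yV])
            show "Px \<subseteq> V - {y}" using xyB unfolding Px_def by blast
          qed
          ultimately show False using cPx by linarith
        qed
        then obtain z where zP: "z \<in> Px" and yz: "{y,z} \<in> R \<union> B" by blast
        have zV: "z \<in> V" using zP unfolding Px_def by blast
        have zny: "z \<noteq> y" using zP xyB unfolding Px_def by blast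
        have "{y,z} \<notin> R"
        proof
          assume "{y,z} \<in> R"
          hence "(y,z) \<in> adj R" using zny by (intro adjI) auto
          hence "z \<in> C y" using zV selfC[OF yV] unfolding C_def by auto
          thus False using False zP by blast
        qed
        hence "{y,z} \<in> B" using yz by blast
        hence "(y,z) \<in> adj B" using zny by (intro adjI) auto
        hence "(z,y) \<in> adj B" by (rule adj_sym)
        thus ?thesis using xz[OF zP] by simp
      qed
    qed
  qed
qed




lemma main_comb:
  fixes V :: "nat set" and R B :: "nat set set" and a :: real
  assumes fin: "finite V" and eR: "edges_on V R" and eB: "edges_on V B" and Vne: "V \<noteq> {}"
    and nn: "\<forall>x\<in>V. real (card {y\<in>V. y \<noteq> x \<and> {x,y} \<notin> R \<union> B}) \<le> a"
  shows "(\<exists>M. connected_matching V R M \<and> real (card (\<Union>M)) \<ge> 2/3 * real (card V) - 4*a - 2) \<or>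
         (\<exists>M. connected_matching V B M \<and> real (card (\<Union>M)) \<ge> 2/3 * real (card V) - 4*a - 2)"
proof -
  obtain w0 where w0: "w0 \<in> V" using Vne by blast
  have a0: "a \<ge> 0" using nn w0 by (meson of_nat_0_le_iff order_trans)
  show ?thesis
  proof (cases "\<exists>w\<in>V. real (card (V - {y\<in>V. (w,y) \<in> (adj R)\<^sup>*})) \<le> 2 * a")
    case True
    then obtain w where wV: "w \<in> V" and small: "real (card (V - {y\<in>V. (w,y) \<in> (adj R)\<^sup>*})) \<le> 2 * a" by blast
    define W where "W = {y\<in>V. (w,y) \<in> (adj R)\<^sup>*}"
    have WV: "W \<subseteq> V" unfolding W_def by blast
    have wW: "w \<in> W" unfolding W_def using wV by simp
    have conn: "\<forall>x\<in>W. (w,x) \<in> (adj R)\<^sup>*" unfolding W_def by blast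
    have nnW: "\<forall>x\<in>W. real (card {y\<in>W. y \<noteq> x \<and> {x,y} \<notin> R \<union> B}) \<le> a"
    proof
      fix x assume xW: "x \<in> W"
      have "card {y\<in>W. y \<noteq> x \<and> {x,y} \<notin> R \<union> B} \<le> card {y\<in>V. y \<noteq> x \<and> {x,y} \<notin> R \<union> B}"
        by (rule card_mono) (use fin WV in auto)
      hence "real (card {y\<in>W. y \<noteq> x \<and> {x,y} \<notin> R \<union> B}) \<le> real (card {y\<in>V. y \<noteq> x \<and> {x,y} \<notin> R \<union> B})"
        by (simp only: of_nat_le_iff)
      thus "real (card {y\<in>W. y \<noteq> x \<and> {x,y} \<notin> R \<union> B}) \<le> a" using nn xW WV by fastforce
    qed
    have "card V = card W + card (V - W)"
      using card_Diff_subset[OF finite_subset[OF WV fin] WV] card_mono[OF fin WV] by simp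
    hence cW: "real (card V) = real (card W) + real (card (V - W))" by simp
    have "real (card (V - W)) \<le> 2 * a" using small unfolding W_def .
    hence bnd: "2/3 * real (card W) - 2*a - 2 \<ge> 2/3 * real (card V) - 4*a - 2" using cW a0 by linarith
    from core[OF fin eR eB WV wW conn nnW] bnd show ?thesis by (meson order_trans)
  next
    case False
    hence big: "\<forall>x\<in>V. real (card (V - {y\<in>V. (x,y) \<in> (adj R)\<^sup>*})) > 2 * a" by (simp add: not_le)
    have conn: "\<forall>x\<in>V. (w0,x) \<in> (adj B)\<^sup>*" using blue_conn[OF fin eR eB nn big w0] by blast
    have nn': "\<forall>x\<in>V. real (card {y\<in>V. y \<noteq> x \<and> {x,y} \<notin> B \<union> R}) \<le> a" using nn by (simp add: Un_commute)
    have bnd: "2/3 * real (card V) - 2*a - 2 \<ge> 2/3 * real (card V) - 4*a - 2" using a0 by linarith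
    from core[OF fin eB eR subset_refl w0 conn nn'] bnd show ?thesis by (meson order_trans)
  qed
qed

lemma nn_from_ac:
  assumes eR: "edges_on V R" and eB: "edges_on V B" and fin: "finite V"
    and ac: "almost_complete V (R \<union> B) a" and xV: "x \<in> V"
  shows "real (card {y\<in>V. y \<noteq> x \<and> {x,y} \<notin> R \<union> B}) \<le> a"
proof -
  define N where "N = {u. {u,x} \<in> R \<union> B}"
  have NV: "N \<subseteq> V - {x}"
  proof
    fix u assume "u \<in> N"
    hence "{u,x} \<in> R \<union> B" unfolding N_def by simp
    then obtain p q where "{u,x} = {p,q}" "p \<in> V" "q \<in> V" "p \<noteq> q"
      using eR eB unfolding edges_on_def by blast
    thus "u \<in> V - {x}" by (metis doubleton_eq_iff insert_iff Diff_iff singletonD)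
  qed
  have eq: "{y\<in>V. y \<noteq> x \<and> {x,y} \<notin> R \<union> B} = (V - {x}) - N"
    unfolding N_def by (auto simp: insert_commute)
  have fD: "finite (V - {x})" using fin by simp
  have "card ((V - {x}) - N) = card (V - {x}) - card N" by (rule card_Diff_subset[OF finite_subset[OF NV fD] NV])
  moreover have "card N \<le> card (V - {x})" by (rule card_mono[OF fD NV])
  moreover have "card (V - {x}) = card V - 1" using xV fin by simp
  moreover have "card V \<ge> 1" using xV fin by (metis One_nat_def Suc_leI card_gt_0_iff empty_iff)
  ultimately have "real (card ((V - {x}) - N)) = real (card V) - 1 - real (card N)" by simp
  moreover have "real (degree (R \<union> B) x) = real (card N)" unfolding degree_def N_def by simp
  moreover have "real (degree (R \<union> B) x) \<ge> real (card V) - 1 - a" using ac xV unfolding almost_complete_def by blast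
  ultimately show ?thesis unfolding eq by linarith
qed

lemma eps_facts:
  fixes \<epsilon> :: real
  assumes "0 < \<epsilon>" and "\<epsilon> < 1 / 10 ^ 12"
  shows "\<epsilon> powr (1/8) > 0" "\<epsilon> \<le> \<epsilon> powr (1/8) / 10^7" "\<epsilon> ^ 4 \<le> \<epsilon>" "\<epsilon> powr (1/8) < 1"
proof -
  define t where "t = \<epsilon> powr (1/8)"
  show t0: "\<epsilon> powr (1/8) > 0" using assms by simp
  have t8: "t ^ 8 = \<epsilon>"
  proof -
    have "t ^ 8 = t powr (real 8)" using t0 unfolding t_def by (simp add: powr_realpow)
    also have "\<dots> = \<epsilon> powr (1/8 * 8)" unfolding t_def by (simp add: powr_powr)
    finally show ?thesis using assms by simp
  qed
  have tl: "t < 1/10"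
  proof (rule ccontr)
    assume "\<not> t < 1/10"
    hence "(1/10::real) ^ 8 \<le> t ^ 8" by (intro power_mono) auto
    hence "(1::real)/10^8 \<le> \<epsilon>" using t8 by (simp add: power_divide)
    moreover have "\<epsilon> < 1/10^12" by (rule assms(2))
    ultimately show False by simp
  qed
  have "t ^ 7 \<le> (1/10) ^ 7" using tl t0 unfolding t_def by (intro power_mono) auto
  hence "t * t ^ 7 \<le> t * (1/10) ^ 7" using t0 unfolding t_def by (intro mult_left_mono) auto
  hence "\<epsilon> \<le> t * (1/10) ^ 7" using t8 by (simp add: power_Suc[symmetric] del: power_Suc)
  thus "\<epsilon> \<le> \<epsilon> powr (1/8) / 10^7" unfolding t_def by (simp add: power_divide field_simps)
  show "\<epsilon> ^ 4 \<le> \<epsilon>" using power_decreasing[of 1 4 \<epsilon>] assms by simp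
  show "\<epsilon> powr (1/8) < 1" using tl unfolding t_def by simp
qed




theorem corollary7p16:
  fixes \<epsilon> :: real
  assumes "0 < \<epsilon>" and "\<epsilon> < 1 / 10 ^ 12"
  shows "\<exists>k0::nat. \<forall>k::nat \<ge> k0. \<forall>(K::nat) (V::nat set) (R::nat set set) (B::nat set set).
    (real K > (1 - \<epsilon>) * real k \<and> card V = K \<and> two_multicoloured_graph V R B \<and>
     almost_complete V (R \<union> B) (27 / 8 * \<epsilon> ^ 4 * real k)) \<longrightarrow>
    (\<exists>M. connected_matching V R M \<and> real (card (\<Union>M)) \<ge> (2 / 3 - 7 * \<epsilon> powr (1 / 8)) * real k) \<or>
    (\<exists>M. connected_matching V B M \<and> real (card (\<Union>M)) \<ge> (2 / 3 - 7 * \<epsilon> powr (1 / 8)) * real k)"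
proof -
  define t where "t = \<epsilon> powr (1/8)"
  have t0: "t > 0" and te: "\<epsilon> \<le> t / 10^7" and e4: "\<epsilon> ^ 4 \<le> \<epsilon>" and t1: "t < 1"
    using eps_facts[OF assms] unfolding t_def by auto
  define k0 :: nat where "k0 = nat \<lceil>100 / t\<rceil>"
  show ?thesis
  proof (intro exI[of _ k0] allI impI)
    fix k K V R B
    assume kk: "k0 \<le> k" and H: "real K > (1 - \<epsilon>) * real k \<and> card V = K \<and> two_multicoloured_graph V R B \<and>
     almost_complete V (R \<union> B) (27 / 8 * \<epsilon> ^ 4 * real k)"
    have HK: "real K > (1 - \<epsilon>) * real k" and cV: "card V = K"
      and tm: "two_multicoloured_graph V R B" and ac: "almost_complete V (R \<union> B) (27 / 8 * \<epsilon> ^ 4 * real k)"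
      using H by auto
    have fin: "finite V" and eR: "edges_on V R" and eB: "edges_on V B"
      using tm unfolding two_multicoloured_graph_def by auto
    have "100 / t \<le> real k0" unfolding k0_def by (rule real_nat_ceiling_ge)
    also have "\<dots> \<le> real k" using kk by simp
    finally have k1: "100 / t \<le> real k" .
    hence tk: "100 \<le> t * real k" using t0 by (simp add: field_simps)
    have "t * real k \<le> real k" using t1 t0 by (intro mult_left_le_one_le) auto
    hence kpos: "real k \<ge> 100" using tk by linarith
    have P1: "\<epsilon> * real k \<le> t / 10^7 * real k" using te by (intro mult_right_mono) auto
    have P2: "\<epsilon> ^ 4 * real k \<le> \<epsilon> * real k" using e4 by (intro mult_right_mono) auto
    have HK': "real K > real k - \<epsilon> * real k" using HK by (simp add: algebra_simps)
    have "\<epsilon> * real k \<le> real k / 2" using P1 t1 kpos by (simp add: field_simps)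
    hence "real K > 0" using HK' kpos by linarith
    hence Vne: "V \<noteq> {}" using cV by auto
    define a where "a = 27 / 8 * \<epsilon> ^ 4 * real k"
    have nn: "\<forall>x\<in>V. real (card {y\<in>V. y \<noteq> x \<and> {x,y} \<notin> R \<union> B}) \<le> a"
      using nn_from_ac[OF eR eB fin ac[folded a_def]] by blast
    have bound: "2/3 * real (card V) - 4*a - 2 \<ge> (2 / 3 - 7 * \<epsilon> powr (1 / 8)) * real k"
    proof -
      have "(2 / 3 - 7 * \<epsilon> powr (1 / 8)) * real k = 2/3 * real k - 7 * (t * real k)"
        unfolding t_def by (simp add: algebra_simps)
      moreover have "a = 27/8 * (\<epsilon> ^ 4 * real k)" unfolding a_def by simp
      moreover have "\<epsilon> * real k \<le> (t * real k) / 10000000" using P1 by simp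
      moreover have "real (card V) = real K" using cV by simp
      ultimately show ?thesis using HK' P2 tk by linarith
    qed
    from main_comb[OF fin eR eB Vne nn] bound show "(\<exists>M. connected_matching V R M \<and> real (card (\<Union>M)) \<ge> (2 / 3 - 7 * \<epsilon> powr (1 / 8)) * real k) \<or>
    (\<exists>M. connected_matching V B M \<and> real (card (\<Union>M)) \<ge> (2 / 3 - 7 * \<epsilon> powr (1 / 8)) * real k)"
      by (meson order_trans)
  qed
qed


end
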